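(* Let $B$ be a soluble skew left brace and let $I$ be a maximal ideal of $B$ (a proper ideal not contained in any other proper ideal). Then $B/I$ is an abelian brace and its group $(B/I,+)=(B/I,\cdot)$ is cyclic of prime order.
   Context: A skew left brace (brace) is a set $B$ with two group structures $(B,+)$ and $(B,\cdot)$ with $a(b+c)=ab-a+ac$; $\lambda_a(b)=-a+ab$. An ideal is a subset that is a normal subgroup of both groups and $\lambda_b$-invariant for all $b$. For ideals $I,J$, $[I,J]$ is the smallest ideal containing $[I,J]_+$, $[I,J]_\cdot$ and all $ij-(i+j)$; $B$ is abelian if $[B,B]=0$. $B$ is soluble if there is a chain $B=I_0\supseteq\cdots\supseteq I_n=0$ with each $I_i$ an ideal of the brace $I_{i-1}$ and $I_{i-1}/I_i$ abelian. *)

theory Defs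
  imports "HOL-Algebra.Algebra" "HOL-Computational_Algebra.Primes"
begin

text \<open>A skew left brace is given by two group structures A = (B,+) and M = (B,.)
  on the same carrier B, written multiplicatively in HOL-Algebra notation.
  The brace axiom a(b+c) = ab - a + ac.\<close>

definition skew_brace :: "'a monoid \<Rightarrow> 'a monoid \<Rightarrow> bool" where
  "skew_brace A M \<longleftrightarrow> group A \<and> group M \<and> carrier A = carrier M \<and>
     (\<forall>a\<in>carrier A. \<forall>b\<in>carrier A. \<forall>c\<in>carrier A.
        a \<otimes>\<^bsub>M\<^esub> (b \<otimes>\<^bsub>A\<^esub> c) =
        (a \<otimes>\<^bsub>M\<^esub> b) \<otimes>\<^bsub>A\<^esub> inv\<^bsub>A\<^esub> a \<otimes>\<^bsub>A\<^esub> (a \<otimes>\<^bsub>M\<^esub> c))"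

definition brace_lambda :: "'a monoid \<Rightarrow> 'a monoid \<Rightarrow> 'a \<Rightarrow> 'a \<Rightarrow> 'a" where
  "brace_lambda A M b x = inv\<^bsub>A\<^esub> b \<otimes>\<^bsub>A\<^esub> (b \<otimes>\<^bsub>M\<^esub> x)"

definition brace_ideal :: "'a monoid \<Rightarrow> 'a monoid \<Rightarrow> 'a set \<Rightarrow> bool" where
  "brace_ideal A M I \<longleftrightarrow> I \<lhd> A \<and> I \<lhd> M \<and>
     (\<forall>b\<in>carrier A. \<forall>x\<in>I. brace_lambda A M b x \<in> I)"

definition brace_comm_gens :: "'a monoid \<Rightarrow> 'a monoid \<Rightarrow> 'a set \<Rightarrow> 'a set \<Rightarrow> 'a set" where
  "brace_comm_gens A M I J =
     {i \<otimes>\<^bsub>A\<^esub> j \<otimes>\<^bsub>A\<^esub> inv\<^bsub>A\<^esub> i \<otimes>\<^bsub>A\<^esub> inv\<^bsub>A\<^esub> j | i j. i \<in> I \<and> j \<in> J}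
   \<union> {i \<otimes>\<^bsub>M\<^esub> j \<otimes>\<^bsub>M\<^esub> inv\<^bsub>M\<^esub> i \<otimes>\<^bsub>M\<^esub> inv\<^bsub>M\<^esub> j | i j. i \<in> I \<and> j \<in> J}
   \<union> {(i \<otimes>\<^bsub>M\<^esub> j) \<otimes>\<^bsub>A\<^esub> inv\<^bsub>A\<^esub> (i \<otimes>\<^bsub>A\<^esub> j) | i j. i \<in> I \<and> j \<in> J}"

definition brace_comm :: "'a monoid \<Rightarrow> 'a monoid \<Rightarrow> 'a set \<Rightarrow> 'a set \<Rightarrow> 'a set" where
  "brace_comm A M I J = \<Inter>{K. brace_ideal A M K \<and> brace_comm_gens A M I J \<subseteq> K}"

definition brace_abelian :: "'a monoid \<Rightarrow> 'a monoid \<Rightarrow> bool" where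
  "brace_abelian A M \<longleftrightarrow> brace_comm A M (carrier A) (carrier A) = {\<one>\<^bsub>A\<^esub>}"

definition brace_soluble :: "'a monoid \<Rightarrow> 'a monoid \<Rightarrow> bool" where
  "brace_soluble A M \<longleftrightarrow> (\<exists>(n::nat) (I::nat \<Rightarrow> 'a set).
     I 0 = carrier A \<and> I n = {\<one>\<^bsub>A\<^esub>} \<and>
     (\<forall>i<n. I (Suc i) \<subseteq> I i \<and>
        brace_ideal (A\<lparr>carrier := I i\<rparr>) (M\<lparr>carrier := I i\<rparr>) (I (Suc i)) \<and>
        brace_abelian (A\<lparr>carrier := I i\<rparr> Mod I (Suc i)) (M\<lparr>carrier := I i\<rparr> Mod I (Suc i))))"

definition brace_maximal_ideal :: "'a monoid \<Rightarrow> 'a monoid \<Rightarrow> 'a set \<Rightarrow> bool" where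
  "brace_maximal_ideal A M I \<longleftrightarrow> brace_ideal A M I \<and> I \<noteq> carrier A \<and>
     (\<forall>J. brace_ideal A M J \<and> J \<noteq> carrier A \<and> I \<subseteq> J \<longrightarrow> J = I)"

end

theory Submission
  imports Defs
begin

locale sbrace = A: group A + M: group M for A M :: "'a monoid" +
  assumes carr: "carrier M = carrier A"
  and ax: "\<And>a b c. \<lbrakk>a \<in> carrier A; b \<in> carrier A; c \<in> carrier A\<rbrakk> \<Longrightarrow>
        a \<otimes>\<^bsub>M\<^esub> (b \<otimes>\<^bsub>A\<^esub> c) =
        (a \<otimes>\<^bsub>M\<^esub> b) \<otimes>\<^bsub>A\<^esub> inv\<^bsub>A\<^esub> a \<otimes>\<^bsub>A\<^esub> (a \<otimes>\<^bsub>M\<^esub> c)"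

lemma sbraceI: "skew_brace A M \<Longrightarrow> sbrace A M"
  unfolding skew_brace_def sbrace_def sbrace_axioms_def by auto

context sbrace begin

lemma Mc[simp]: "a \<in> carrier A \<Longrightarrow> b \<in> carrier A \<Longrightarrow> a \<otimes>\<^bsub>M\<^esub> b \<in> carrier A"
  using M.m_closed carr by auto

lemma Mic[simp]: "a \<in> carrier A \<Longrightarrow> inv\<^bsub>M\<^esub> a \<in> carrier A"
  using M.inv_closed carr by auto

lemma one_eq: "\<one>\<^bsub>M\<^esub> = \<one>\<^bsub>A\<^esub>"
proof -
  let ?x = "\<one>\<^bsub>A\<^esub> \<otimes>\<^bsub>M\<^esub> \<one>\<^bsub>A\<^esub>"
  have "?x = ?x \<otimes>\<^bsub>A\<^esub> inv\<^bsub>A\<^esub> \<one>\<^bsub>A\<^esub> \<otimes>\<^bsub>A\<^esub> ?x"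
    using ax[of "\<one>\<^bsub>A\<^esub>" "\<one>\<^bsub>A\<^esub>" "\<one>\<^bsub>A\<^esub>"] by simp
  hence "?x = ?x \<otimes>\<^bsub>A\<^esub> ?x" by simp
  hence "?x = \<one>\<^bsub>A\<^esub>" by (metis A.one_closed A.r_cancel_one' Mc)
  moreover have "\<one>\<^bsub>A\<^esub> \<in> carrier M" using carr by simp
  ultimately show ?thesis by (metis M.r_cancel_one')
qed

lemma Mr_one[simp]: "a \<in> carrier A \<Longrightarrow> a \<otimes>\<^bsub>M\<^esub> \<one>\<^bsub>A\<^esub> = a"
  using one_eq carr M.r_one by force
lemma Ml_one[simp]: "a \<in> carrier A \<Longrightarrow> \<one>\<^bsub>A\<^esub> \<otimes>\<^bsub>M\<^esub> a = a"
  using one_eq carr M.l_one by force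

definition lam where "lam b x = inv\<^bsub>A\<^esub> b \<otimes>\<^bsub>A\<^esub> (b \<otimes>\<^bsub>M\<^esub> x)"

lemma lam_closed[simp]: "b \<in> carrier A \<Longrightarrow> x \<in> carrier A \<Longrightarrow> lam b x \<in> carrier A"
  unfolding lam_def by simp

lemma lam_eq: "lam b x = brace_lambda A M b x"
  unfolding lam_def brace_lambda_def by simp

lemma mult_inv: assumes a: "a \<in> carrier A" and b: "b \<in> carrier A"
  shows "a \<otimes>\<^bsub>M\<^esub> inv\<^bsub>A\<^esub> b = a \<otimes>\<^bsub>A\<^esub> inv\<^bsub>A\<^esub> (a \<otimes>\<^bsub>M\<^esub> b) \<otimes>\<^bsub>A\<^esub> a"
proof -
  have "a = (a \<otimes>\<^bsub>M\<^esub> b) \<otimes>\<^bsub>A\<^esub> inv\<^bsub>A\<^esub> a \<otimes>\<^bsub>A\<^esub> (a \<otimes>\<^bsub>M\<^esub> inv\<^bsub>A\<^esub> b)"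
    using ax[of a b "inv\<^bsub>A\<^esub> b"] a b by simp
  define p where "p = a \<otimes>\<^bsub>M\<^esub> b"
  define r where "r = a \<otimes>\<^bsub>M\<^esub> inv\<^bsub>A\<^esub> b"
  have pc: "p \<in> carrier A" and rc: "r \<in> carrier A" using a b by (auto simp: p_def r_def)
  have e: "a = p \<otimes>\<^bsub>A\<^esub> inv\<^bsub>A\<^esub> a \<otimes>\<^bsub>A\<^esub> r" using \<open>a = _\<close> unfolding p_def r_def .
  have "r = inv\<^bsub>A\<^esub> (p \<otimes>\<^bsub>A\<^esub> inv\<^bsub>A\<^esub> a) \<otimes>\<^bsub>A\<^esub> (p \<otimes>\<^bsub>A\<^esub> inv\<^bsub>A\<^esub> a \<otimes>\<^bsub>A\<^esub> r)"
  proof -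
    define x where "x = p \<otimes>\<^bsub>A\<^esub> inv\<^bsub>A\<^esub> a"
    have xc: "x \<in> carrier A" using pc a by (simp add: x_def)
    have "r = inv\<^bsub>A\<^esub> x \<otimes>\<^bsub>A\<^esub> (x \<otimes>\<^bsub>A\<^esub> r)"
      using xc rc by (simp add: A.m_assoc[symmetric] A.l_inv)
    thus ?thesis unfolding x_def .
  qed
  also have "\<dots> = inv\<^bsub>A\<^esub> (p \<otimes>\<^bsub>A\<^esub> inv\<^bsub>A\<^esub> a) \<otimes>\<^bsub>A\<^esub> a" using e by simp
  also have "\<dots> = a \<otimes>\<^bsub>A\<^esub> inv\<^bsub>A\<^esub> p \<otimes>\<^bsub>A\<^esub> a" using pc a by (simp add: A.inv_mult_group)
  finally show ?thesis unfolding p_def r_def .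
qed

lemma lam_mult: assumes a: "a \<in> carrier A" and b: "b \<in> carrier A" and x: "x \<in> carrier A"
  shows "lam a (lam b x) = lam (a \<otimes>\<^bsub>M\<^esub> b) x"
proof -
  have "lam a (lam b x) = inv\<^bsub>A\<^esub> a \<otimes>\<^bsub>A\<^esub> ((a \<otimes>\<^bsub>M\<^esub> inv\<^bsub>A\<^esub> b) \<otimes>\<^bsub>A\<^esub> inv\<^bsub>A\<^esub> a \<otimes>\<^bsub>A\<^esub> (a \<otimes>\<^bsub>M\<^esub> (b \<otimes>\<^bsub>M\<^esub> x)))"
    unfolding lam_def using ax[of a "inv\<^bsub>A\<^esub> b" "b \<otimes>\<^bsub>M\<^esub> x"] a b x by simp
  also have "\<dots> = inv\<^bsub>A\<^esub> (a \<otimes>\<^bsub>M\<^esub> b) \<otimes>\<^bsub>A\<^esub> (a \<otimes>\<^bsub>M\<^esub> (b \<otimes>\<^bsub>M\<^esub> x))"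
    using a b x by (simp add: mult_inv A.m_assoc A.l_inv_ex A.r_inv A.l_inv flip: A.m_assoc[of "inv\<^bsub>A\<^esub> a" a])
  also have "\<dots> = lam (a \<otimes>\<^bsub>M\<^esub> b) x" unfolding lam_def using a b x carr by (simp add: M.m_assoc)
  finally show ?thesis .
qed

lemma lam_one[simp]: "x \<in> carrier A \<Longrightarrow> lam \<one>\<^bsub>A\<^esub> x = x"
  unfolding lam_def by simp

lemma lam_inv[simp]: assumes a: "a \<in> carrier A" and x: "x \<in> carrier A"
  shows "lam a (lam (inv\<^bsub>M\<^esub> a) x) = x"
  using lam_mult[of a "inv\<^bsub>M\<^esub> a" x] a x carr one_eq by simp

end

locale sideal = sbrace + fixes I assumes ideal: "brace_ideal A M I"
begin

lemma IA: "I \<lhd> A" and IM: "I \<lhd> M" and lamI: "\<And>b x. b \<in> carrier A \<Longrightarrow> x \<in> I \<Longrightarrow> lam b x \<in> I"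
  using ideal unfolding brace_ideal_def by (auto simp: lam_eq)

lemma I_sub: "I \<subseteq> carrier A" using IA normal_imp_subgroup subgroup.subset by blast

lemma lam_image: assumes a: "a \<in> carrier A" shows "lam a ` I = I"
proof
  show "lam a ` I \<subseteq> I" using lamI a by auto
  show "I \<subseteq> lam a ` I"
  proof
    fix y assume y: "y \<in> I"
    hence "y = lam a (lam (inv\<^bsub>M\<^esub> a) y)" using a I_sub by auto
    moreover have "lam (inv\<^bsub>M\<^esub> a) y \<in> I" using lamI y a by simp
    ultimately show "y \<in> lam a ` I" by blast
  qed
qed

lemma coset_eq: assumes a: "a \<in> carrier A" shows "I #>\<^bsub>A\<^esub> a = I #>\<^bsub>M\<^esub> a"
proof -
  have "I #>\<^bsub>M\<^esub> a = a <#\<^bsub>M\<^esub> I" using normal.coset_eq[OF IM] a carr by auto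
  also have "\<dots> = (\<lambda>i. a \<otimes>\<^bsub>M\<^esub> i) ` I" unfolding l_coset_def by auto
  also have "\<dots> = (\<lambda>i. a \<otimes>\<^bsub>A\<^esub> lam a i) ` I"
  proof (rule image_cong[OF refl])
    fix i assume "i \<in> I" hence i: "i \<in> carrier A" using I_sub by auto
    show "a \<otimes>\<^bsub>M\<^esub> i = a \<otimes>\<^bsub>A\<^esub> lam a i" unfolding lam_def using a i
      by (simp add: A.m_assoc[symmetric] A.r_inv)
  qed
  also have "\<dots> = (\<lambda>y. a \<otimes>\<^bsub>A\<^esub> y) ` (lam a ` I)" by auto
  also have "\<dots> = a <#\<^bsub>A\<^esub> I" unfolding lam_image[OF a] l_coset_def by auto
  also have "\<dots> = I #>\<^bsub>A\<^esub> a" using normal.coset_eq[OF IA] a by auto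
  finally show ?thesis by simp
qed

definition phi where "phi x = I #>\<^bsub>A\<^esub> x"

lemma QA_group: "group (A Mod I)" using normal.factorgroup_is_group[OF IA] .
lemma QM_group: "group (M Mod I)" using normal.factorgroup_is_group[OF IM] .

lemma carrQ: "carrier (A Mod I) = phi ` carrier A"
  unfolding carrier_FactGroup phi_def by simp

lemma carrQM: "carrier (M Mod I) = carrier (A Mod I)"
  unfolding carrier_FactGroup using coset_eq carr by (auto simp: image_def)

lemma homA: "group_hom A (A Mod I) phi"
  unfolding group_hom_def group_hom_axioms_def using QA_group A.group_axioms
    normal.r_coset_hom_Mod[OF IA] unfolding phi_def by auto

lemma homM: "group_hom M (M Mod I) phi"
proof -
  have h: "(\<lambda>a. I #>\<^bsub>M\<^esub> a) \<in> hom M (M Mod I)" using normal.r_coset_hom_Mod[OF IM] .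
  have "phi \<in> hom M (M Mod I)"
    using h unfolding hom_def Pi_def phi_def using coset_eq carr by auto
  thus ?thesis unfolding group_hom_def group_hom_axioms_def using QM_group M.group_axioms by auto
qed

lemma phi_closed[simp]: "x \<in> carrier A \<Longrightarrow> phi x \<in> carrier (A Mod I)"
  using carrQ by auto

lemma phiA_mult: "x \<in> carrier A \<Longrightarrow> y \<in> carrier A \<Longrightarrow> phi (x \<otimes>\<^bsub>A\<^esub> y) = phi x \<otimes>\<^bsub>A Mod I\<^esub> phi y"
  using group_hom.hom_mult[OF homA] by simp
lemma phiM_mult: "x \<in> carrier A \<Longrightarrow> y \<in> carrier A \<Longrightarrow> phi (x \<otimes>\<^bsub>M\<^esub> y) = phi x \<otimes>\<^bsub>M Mod I\<^esub> phi y"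
  using group_hom.hom_mult[OF homM] carr by simp
lemma phiA_inv: "x \<in> carrier A \<Longrightarrow> phi (inv\<^bsub>A\<^esub> x) = inv\<^bsub>A Mod I\<^esub> phi x"
  using group_hom.hom_inv[OF homA] by simp
lemma phiM_inv: "x \<in> carrier A \<Longrightarrow> phi (inv\<^bsub>M\<^esub> x) = inv\<^bsub>M Mod I\<^esub> phi x"
  using group_hom.hom_inv[OF homM] carr by simp
lemma phi_one: "phi \<one>\<^bsub>A\<^esub> = \<one>\<^bsub>A Mod I\<^esub>"
  using group_hom.hom_one[OF homA] by simp

lemma phi_eq_one: assumes x: "x \<in> carrier A" shows "phi x = \<one>\<^bsub>A Mod I\<^esub> \<longleftrightarrow> x \<in> I"
proof
  assume "phi x = \<one>\<^bsub>A Mod I\<^esub>"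
  hence "I #>\<^bsub>A\<^esub> x = I" unfolding phi_def by simp
  moreover have "x \<in> I #>\<^bsub>A\<^esub> x" using A.rcos_self[OF x] IA normal_imp_subgroup by blast
  ultimately show "x \<in> I" by simp
next
  assume "x \<in> I" thus "phi x = \<one>\<^bsub>A Mod I\<^esub>" unfolding phi_def
    using subgroup.rcos_const[OF normal_imp_subgroup[OF IA] A.group_axioms] by simp
qed

end

lemma restr_subgroup: "group G \<Longrightarrow> K \<subseteq> carrier G \<Longrightarrow> group (G\<lparr>carrier := K\<rparr>) \<Longrightarrow> subgroup K G"
  using group.group_incl_imp_subgroup by blast

lemma sbrace_restr:
  assumes "sbrace A M" "K \<subseteq> carrier A" "group (A\<lparr>carrier := K\<rparr>)" "group (M\<lparr>carrier := K\<rparr>)"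
  shows "sbrace (A\<lparr>carrier := K\<rparr>) (M\<lparr>carrier := K\<rparr>)"
proof -
  interpret sbrace A M by fact
  have sK: "subgroup K A" using restr_subgroup[OF A.group_axioms assms(2,3)] .
  show ?thesis
  proof (rule sbrace.intro[OF assms(3,4)], rule sbrace_axioms.intro)
    show "carrier (M\<lparr>carrier := K\<rparr>) = carrier (A\<lparr>carrier := K\<rparr>)" by simp
    fix a b c assume abc: "a \<in> carrier (A\<lparr>carrier := K\<rparr>)" "b \<in> carrier (A\<lparr>carrier := K\<rparr>)" "c \<in> carrier (A\<lparr>carrier := K\<rparr>)"
    have "inv\<^bsub>A\<lparr>carrier := K\<rparr>\<^esub> a = inv\<^bsub>A\<^esub> a" using A.m_inv_consistent[OF sK] abc by simp
    moreover have "a \<in> carrier A" "b \<in> carrier A" "c \<in> carrier A" using abc assms(2) by auto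
    ultimately show "a \<otimes>\<^bsub>M\<lparr>carrier := K\<rparr>\<^esub> (b \<otimes>\<^bsub>A\<lparr>carrier := K\<rparr>\<^esub> c) =
         a \<otimes>\<^bsub>M\<lparr>carrier := K\<rparr>\<^esub> b \<otimes>\<^bsub>A\<lparr>carrier := K\<rparr>\<^esub> inv\<^bsub>A\<lparr>carrier := K\<rparr>\<^esub> a \<otimes>\<^bsub>A\<lparr>carrier := K\<rparr>\<^esub> (a \<otimes>\<^bsub>M\<lparr>carrier := K\<rparr>\<^esub> c)"
      using ax[of a b c] by simp
  qed
qed

context sideal begin

lemma abelian_gens:
  assumes ab: "brace_abelian (A Mod I) (M Mod I)" and x: "x \<in> carrier A" and y: "y \<in> carrier A"
  shows "x \<otimes>\<^bsub>A\<^esub> y \<otimes>\<^bsub>A\<^esub> inv\<^bsub>A\<^esub> x \<otimes>\<^bsub>A\<^esub> inv\<^bsub>A\<^esub> y \<in> I"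
    and "(x \<otimes>\<^bsub>M\<^esub> y) \<otimes>\<^bsub>A\<^esub> inv\<^bsub>A\<^esub> (x \<otimes>\<^bsub>A\<^esub> y) \<in> I"
proof -
  let ?Q = "A Mod I"
  have sub: "brace_comm_gens ?Q (M Mod I) (carrier ?Q) (carrier ?Q) \<subseteq> {\<one>\<^bsub>?Q\<^esub>}"
    using ab unfolding brace_abelian_def brace_comm_def by blast
  have px: "phi x \<in> carrier ?Q" and py: "phi y \<in> carrier ?Q" using x y by auto
  have "phi x \<otimes>\<^bsub>?Q\<^esub> phi y \<otimes>\<^bsub>?Q\<^esub> inv\<^bsub>?Q\<^esub> phi x \<otimes>\<^bsub>?Q\<^esub> inv\<^bsub>?Q\<^esub> phi y
     \<in> brace_comm_gens ?Q (M Mod I) (carrier ?Q) (carrier ?Q)"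
    unfolding brace_comm_gens_def using px py by blast
  hence "phi x \<otimes>\<^bsub>?Q\<^esub> phi y \<otimes>\<^bsub>?Q\<^esub> inv\<^bsub>?Q\<^esub> phi x \<otimes>\<^bsub>?Q\<^esub> inv\<^bsub>?Q\<^esub> phi y = \<one>\<^bsub>?Q\<^esub>"
    using sub by blast
  hence "phi (x \<otimes>\<^bsub>A\<^esub> y \<otimes>\<^bsub>A\<^esub> inv\<^bsub>A\<^esub> x \<otimes>\<^bsub>A\<^esub> inv\<^bsub>A\<^esub> y) = \<one>\<^bsub>?Q\<^esub>"
    using x y by (simp add: phiA_mult phiA_inv)
  thus "x \<otimes>\<^bsub>A\<^esub> y \<otimes>\<^bsub>A\<^esub> inv\<^bsub>A\<^esub> x \<otimes>\<^bsub>A\<^esub> inv\<^bsub>A\<^esub> y \<in> I"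
    using phi_eq_one x y by simp
  have "(phi x \<otimes>\<^bsub>M Mod I\<^esub> phi y) \<otimes>\<^bsub>?Q\<^esub> inv\<^bsub>?Q\<^esub> (phi x \<otimes>\<^bsub>?Q\<^esub> phi y)
     \<in> brace_comm_gens ?Q (M Mod I) (carrier ?Q) (carrier ?Q)"
    unfolding brace_comm_gens_def using px py by blast
  hence "(phi x \<otimes>\<^bsub>M Mod I\<^esub> phi y) \<otimes>\<^bsub>?Q\<^esub> inv\<^bsub>?Q\<^esub> (phi x \<otimes>\<^bsub>?Q\<^esub> phi y) = \<one>\<^bsub>?Q\<^esub>"
    using sub by blast
  hence "phi ((x \<otimes>\<^bsub>M\<^esub> y) \<otimes>\<^bsub>A\<^esub> inv\<^bsub>A\<^esub> (x \<otimes>\<^bsub>A\<^esub> y)) = \<one>\<^bsub>?Q\<^esub>"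
    using x y by (simp add: phiA_mult phiA_inv phiM_mult)
  thus "(x \<otimes>\<^bsub>M\<^esub> y) \<otimes>\<^bsub>A\<^esub> inv\<^bsub>A\<^esub> (x \<otimes>\<^bsub>A\<^esub> y) \<in> I"
    using phi_eq_one x y by simp
qed

end

lemma normal_pre:
  assumes G: "group G" and h: "group_hom G Q f" and K: "K \<subseteq> carrier G"
    and J: "J \<lhd> G\<lparr>carrier := K\<rparr>" and surj: "\<forall>b\<in>carrier G. \<exists>x\<in>K. f b = f x"
  shows "{b\<in>carrier G. \<exists>j\<in>J. f b = f j} \<lhd> G"
proof -
  interpret G: group G by fact
  interpret h: group_hom G Q f by fact
  have gK: "group (G\<lparr>carrier := K\<rparr>)" using J by (simp add: normal_def)
  have sK: "subgroup K G" using restr_subgroup[OF G K gK] .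
  have sJK: "subgroup J (G\<lparr>carrier := K\<rparr>)" using J normal_imp_subgroup by blast
  hence JK: "J \<subseteq> K" using subgroup.subset[OF sJK] by simp
  have gJ: "group (G\<lparr>carrier := J\<rparr>)" using subgroup.subgroup_is_group[OF sJK gK] by simp
  have sJ: "subgroup J G" using restr_subgroup[OF G _ gJ] JK K by blast
  have invK: "\<And>x. x \<in> K \<Longrightarrow> inv\<^bsub>G\<lparr>carrier := K\<rparr>\<^esub> x = inv\<^bsub>G\<^esub> x"
    using G.m_inv_consistent[OF sK] by simp
  have conj: "\<And>x j. x \<in> K \<Longrightarrow> j \<in> J \<Longrightarrow> x \<otimes>\<^bsub>G\<^esub> j \<otimes>\<^bsub>G\<^esub> inv\<^bsub>G\<^esub> x \<in> J"
    using J invK unfolding group.normal_inv_iff[OF gK] by fastforce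
  let ?S = "{b\<in>carrier G. \<exists>j\<in>J. f b = f j}"
  have jc: "\<And>j. j \<in> J \<Longrightarrow> j \<in> carrier G" using subgroup.mem_carrier[OF sJ] .
  have sub: "subgroup ?S G"
  proof (rule G.subgroupI)
    show "?S \<subseteq> carrier G" by auto
    show "?S \<noteq> {}" using subgroup.one_closed[OF sJ] G.one_closed by blast
    fix a b assume a: "a \<in> ?S" and b: "b \<in> ?S"
    then obtain ja jb where ja: "ja \<in> J" "f a = f ja" and jb: "jb \<in> J" "f b = f jb" by blast
    have "f (inv\<^bsub>G\<^esub> a) = f (inv\<^bsub>G\<^esub> ja)" using a ja jc by simp
    moreover have "inv\<^bsub>G\<^esub> ja \<in> J" using subgroup.m_inv_closed[OF sJ ja(1)] .
    ultimately show "inv\<^bsub>G\<^esub> a \<in> ?S" using a by blast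
    have "f (a \<otimes>\<^bsub>G\<^esub> b) = f (ja \<otimes>\<^bsub>G\<^esub> jb)" using a b ja jb jc by simp
    moreover have "ja \<otimes>\<^bsub>G\<^esub> jb \<in> J" using subgroup.m_closed[OF sJ ja(1) jb(1)] .
    ultimately show "a \<otimes>\<^bsub>G\<^esub> b \<in> ?S" using a b by blast
  qed
  show ?thesis unfolding G.normal_inv_iff
  proof (intro conjI sub ballI)
    fix b s assume b: "b \<in> carrier G" and s: "s \<in> ?S"
    then obtain j where j: "j \<in> J" "f s = f j" by blast
    obtain x where x: "x \<in> K" "f b = f x" using surj b by blast
    have xc: "x \<in> carrier G" using x K by auto
    have "f (b \<otimes>\<^bsub>G\<^esub> s \<otimes>\<^bsub>G\<^esub> inv\<^bsub>G\<^esub> b) = f (x \<otimes>\<^bsub>G\<^esub> j \<otimes>\<^bsub>G\<^esub> inv\<^bsub>G\<^esub> x)"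
      using b s j x xc jc by simp
    then show "b \<otimes>\<^bsub>G\<^esub> s \<otimes>\<^bsub>G\<^esub> inv\<^bsub>G\<^esub> b \<in> ?S" using conj[OF x(1) j(1)] b s by auto
  qed
qed


context sideal begin

lemma ideal_S:
  assumes K: "K \<subseteq> carrier A" and gA: "group (A\<lparr>carrier := K\<rparr>)" and gM: "group (M\<lparr>carrier := K\<rparr>)"
    and J: "brace_ideal (A\<lparr>carrier := K\<rparr>) (M\<lparr>carrier := K\<rparr>) J"
    and surj: "\<forall>b\<in>carrier A. \<exists>x\<in>K. phi b = phi x"
  shows "brace_ideal A M {b\<in>carrier A. \<exists>j\<in>J. phi b = phi j}"
proof -
  let ?S = "{b\<in>carrier A. \<exists>j\<in>J. phi b = phi j}"
  have JA: "J \<lhd> A\<lparr>carrier := K\<rparr>" and JM: "J \<lhd> M\<lparr>carrier := K\<rparr>"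
    and Jl: "\<forall>b\<in>K. \<forall>x\<in>J. brace_lambda (A\<lparr>carrier := K\<rparr>) (M\<lparr>carrier := K\<rparr>) b x \<in> J"
    using J unfolding brace_ideal_def by auto
  have sK: "subgroup K A" using restr_subgroup[OF A.group_axioms K gA] .
  have JK: "J \<subseteq> K" using subgroup.subset[OF normal_imp_subgroup[OF JA]] by simp
  have nA: "?S \<lhd> A" using normal_pre[OF A.group_axioms homA K JA surj] .
  have nM: "{b\<in>carrier M. \<exists>j\<in>J. phi b = phi j} \<lhd> M"
    using normal_pre[OF M.group_axioms homM _ JM] K surj carr by simp
  show ?thesis unfolding brace_ideal_def
  proof (intro conjI nA ballI)
    show "?S \<lhd> M" using nM carr by simp
    fix b s assume b: "b \<in> carrier A" and s: "s \<in> ?S"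
    then obtain j where j: "j \<in> J" "phi s = phi j" by blast
    obtain x where x: "x \<in> K" "phi b = phi x" using surj b by blast
    have xc: "x \<in> carrier A" and jc: "j \<in> carrier A" using x j JK K by auto
    have "brace_lambda (A\<lparr>carrier := K\<rparr>) (M\<lparr>carrier := K\<rparr>) x j = lam x j"
      unfolding brace_lambda_def lam_def using A.m_inv_consistent[OF sK x(1)] by simp
    hence lj: "lam x j \<in> J" using Jl x j by metis
    have "phi (lam b s) = inv\<^bsub>A Mod I\<^esub> phi b \<otimes>\<^bsub>A Mod I\<^esub> (phi b \<otimes>\<^bsub>M Mod I\<^esub> phi s)"
      unfolding lam_def using b s by (simp add: phiA_mult phiA_inv phiM_mult)
    also have "\<dots> = phi (lam x j)"
      unfolding lam_def using xc jc x j by (simp add: phiA_mult phiA_inv phiM_mult)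
    finally have "phi (lam b s) = phi (lam x j)" .
    thus "brace_lambda A M b s \<in> ?S" using lj b s by (auto simp: lam_eq[symmetric])
  qed
qed

end

lemma simple_cyclic:
  assumes G: "group G" and nt: "carrier G \<noteq> {\<one>\<^bsub>G\<^esub>}"
    and sub: "\<And>H. subgroup H G \<Longrightarrow> H = {\<one>\<^bsub>G\<^esub>} \<or> H = carrier G"
  shows "cyclic_group G \<and> Factorial_Ring.prime (order G)"
proof -
  interpret group G by fact
  obtain g where g: "g \<in> carrier G" "g \<noteq> \<one>\<^bsub>G\<^esub>" using nt one_closed by blast
  have gen: "generate G {x} = carrier G" if x: "x \<in> carrier G" "x \<noteq> \<one>\<^bsub>G\<^esub>" for x
  proof -
    have "subgroup (generate G {x}) G" using generate_is_subgroup x by simp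
    moreover have "x \<in> generate G {x}" by (simp add: generate.incl)
    ultimately show ?thesis using sub x by blast
  qed
  have cyc: "cyclic_group G" unfolding cyclic_group
  proof (intro bexI[of _ g])
    have "carrier G = {g [^]\<^bsub>G\<^esub> (k::int) | k. k \<in> UNIV}" using gen[OF g] generate_pow[OF g(1)] by simp
    thus "carrier G = range (\<lambda>n::int. g [^]\<^bsub>G\<^esub> n)" by (auto simp: image_def)
  qed (rule g)
  have gcard: "ord x = order G" if x: "x \<in> carrier G" "x \<noteq> \<one>\<^bsub>G\<^esub>" for x
    using generate_pow_card[OF x(1)] gen[OF x] unfolding order_def by simp
  have o0: "ord g \<noteq> 0"
  proof (cases "g [^]\<^bsub>G\<^esub> (2::nat) = \<one>\<^bsub>G\<^esub>")
    case True thus ?thesis using ord_eq_0[OF g(1)] by auto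
  next
    case False
    have hc: "g [^]\<^bsub>G\<^esub> (2::nat) \<in> carrier G" using g by simp
    have "g \<in> generate G {g [^]\<^bsub>G\<^esub> (2::nat)}" using gen[OF hc False] g by simp
    then obtain k :: int where "g = (g [^]\<^bsub>G\<^esub> (2::nat)) [^]\<^bsub>G\<^esub> k" using generate_pow[OF hc] by auto
    also have "\<dots> = g [^]\<^bsub>G\<^esub> (2 * k)" using int_pow_pow[OF g(1), of 2 k] int_pow_int[of G g 2] by simp
    finally have "g [^]\<^bsub>G\<^esub> (1::int) = g [^]\<^bsub>G\<^esub> (2 * k)" using g by simp
    hence "int (ord g) dvd (2 * k - 1)" using int_pow_eq[OF g(1)] by blast
    moreover have "2 * k - 1 \<noteq> 0" by presburger
    ultimately show ?thesis by auto
  qed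
  have o1: "ord g \<noteq> 1" using ord_eq_1[OF g(1)] g by simp
  have pr: "Factorial_Ring.prime (ord g)" unfolding prime_nat_iff
  proof (intro conjI allI impI)
    show "1 < ord g" using o0 o1 by simp
    fix d assume d: "d dvd ord g"
    show "d = 1 \<or> d = ord g"
    proof (rule ccontr)
      assume nd: "\<not> (d = 1 \<or> d = ord g)"
      have d0: "d \<noteq> 0" using d o0 by auto
      have xc: "g [^]\<^bsub>G\<^esub> d \<in> carrier G" using g by simp
      show False
      proof (cases "g [^]\<^bsub>G\<^esub> d = \<one>\<^bsub>G\<^esub>")
        case True
        hence "ord g dvd d" using pow_eq_id[OF g(1)] by simp
        thus False using d nd dvd_antisym by blast
      next
        case False
        have "ord (g [^]\<^bsub>G\<^esub> d) = ord g div d" using ord_pow[OF g(1) d d0] .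
        moreover have "ord (g [^]\<^bsub>G\<^esub> d) = ord g" using gcard[OF xc False] gcard[OF g] by simp
        ultimately have "ord g div d = ord g" by simp
        moreover have "d > 1" using nd d0 by simp
        ultimately show False using o0 by (metis div_less_dividend neq0_conv less_irrefl)
      qed
    qed
  qed
  show ?thesis using cyc pr gcard[OF g] by simp
qed


lemma comm_commutator:
  assumes "group G" "x \<in> carrier G" "y \<in> carrier G" "x \<otimes>\<^bsub>G\<^esub> y = y \<otimes>\<^bsub>G\<^esub> x"
  shows "x \<otimes>\<^bsub>G\<^esub> y \<otimes>\<^bsub>G\<^esub> inv\<^bsub>G\<^esub> x \<otimes>\<^bsub>G\<^esub> inv\<^bsub>G\<^esub> y = \<one>\<^bsub>G\<^esub>"
proof -
  interpret group G by fact
  have "x \<otimes>\<^bsub>G\<^esub> y \<otimes>\<^bsub>G\<^esub> inv\<^bsub>G\<^esub> x \<otimes>\<^bsub>G\<^esub> inv\<^bsub>G\<^esub> y = y \<otimes>\<^bsub>G\<^esub> (x \<otimes>\<^bsub>G\<^esub> inv\<^bsub>G\<^esub> x) \<otimes>\<^bsub>G\<^esub> inv\<^bsub>G\<^esub> y"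
    using assms by (simp add: m_assoc)
  also have "\<dots> = \<one>\<^bsub>G\<^esub>" using assms by simp
  finally show ?thesis .
qed

lemma normal_vimage:
  assumes h: "group_hom G Q f" and H: "subgroup H Q"
    and c: "\<And>z y. z \<in> carrier Q \<Longrightarrow> y \<in> H \<Longrightarrow> z \<otimes>\<^bsub>Q\<^esub> y \<otimes>\<^bsub>Q\<^esub> inv\<^bsub>Q\<^esub> z \<in> H"
  shows "{b\<in>carrier G. f b \<in> H} \<lhd> G"
proof -
  interpret h: group_hom G Q f by fact
  let ?S = "{b\<in>carrier G. f b \<in> H}"
  have sub: "subgroup ?S G"
  proof (rule h.G.subgroupI)
    show "?S \<subseteq> carrier G" by auto
    show "?S \<noteq> {}" using subgroup.one_closed[OF H] h.G.one_closed by auto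
    fix a b assume a: "a \<in> ?S" and b: "b \<in> ?S"
    show "inv\<^bsub>G\<^esub> a \<in> ?S" using a subgroup.m_inv_closed[OF H, of "f a"] by simp
    show "a \<otimes>\<^bsub>G\<^esub> b \<in> ?S" using a b subgroup.m_closed[OF H, of "f a" "f b"] by simp
  qed
  show ?thesis unfolding h.G.normal_inv_iff
  proof (intro conjI sub ballI)
    fix b s assume b: "b \<in> carrier G" and s: "s \<in> ?S"
    have "f b \<in> carrier Q" using b by simp
    hence "f b \<otimes>\<^bsub>Q\<^esub> f s \<otimes>\<^bsub>Q\<^esub> inv\<^bsub>Q\<^esub> f b \<in> H" using c s by simp
    thus "b \<otimes>\<^bsub>G\<^esub> s \<otimes>\<^bsub>G\<^esub> inv\<^bsub>G\<^esub> b \<in> ?S" using b s by simp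
  qed
qed


declare mult_FactGroup[simp del]

context sideal begin

lemma final:
  assumes E1: "\<And>x y. x \<in> carrier A \<Longrightarrow> y \<in> carrier A \<Longrightarrow> phi (x \<otimes>\<^bsub>M\<^esub> y) = phi (x \<otimes>\<^bsub>A\<^esub> y)"
    and E2: "\<And>x y. x \<in> carrier A \<Longrightarrow> y \<in> carrier A \<Longrightarrow> phi (x \<otimes>\<^bsub>A\<^esub> y) = phi (y \<otimes>\<^bsub>A\<^esub> x)"
    and mx: "brace_maximal_ideal A M I"
  shows "skew_brace (A Mod I) (M Mod I) \<and> brace_abelian (A Mod I) (M Mod I)
    \<and> carrier (A Mod I) = carrier (M Mod I)
    \<and> (\<forall>x\<in>carrier (A Mod I). \<forall>y\<in>carrier (A Mod I).
          x \<otimes>\<^bsub>A Mod I\<^esub> y = x \<otimes>\<^bsub>M Mod I\<^esub> y)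
    \<and> cyclic_group (A Mod I) \<and> Factorial_Ring.prime (order (A Mod I))"
proof -
  let ?Q = "A Mod I" and ?R = "M Mod I"
  interpret Q: group ?Q using QA_group .
  interpret R: group ?R using QM_group .
  have ops: "\<And>xx yy. xx \<in> carrier ?Q \<Longrightarrow> yy \<in> carrier ?Q \<Longrightarrow> xx \<otimes>\<^bsub>?R\<^esub> yy = xx \<otimes>\<^bsub>?Q\<^esub> yy"
  proof -
    fix xx yy assume "xx \<in> carrier ?Q" "yy \<in> carrier ?Q"
    then obtain a b where ab: "a \<in> carrier A" "b \<in> carrier A" "xx = phi a" "yy = phi b" using carrQ by auto
    show "xx \<otimes>\<^bsub>?R\<^esub> yy = xx \<otimes>\<^bsub>?Q\<^esub> yy" using ab E1[of a b] by (simp add: phiA_mult phiM_mult)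
  qed
  have comm: "\<And>xx yy. xx \<in> carrier ?Q \<Longrightarrow> yy \<in> carrier ?Q \<Longrightarrow> xx \<otimes>\<^bsub>?Q\<^esub> yy = yy \<otimes>\<^bsub>?Q\<^esub> xx"
  proof -
    fix xx yy assume "xx \<in> carrier ?Q" "yy \<in> carrier ?Q"
    then obtain a b where ab: "a \<in> carrier A" "b \<in> carrier A" "xx = phi a" "yy = phi b" using carrQ by auto
    show "xx \<otimes>\<^bsub>?Q\<^esub> yy = yy \<otimes>\<^bsub>?Q\<^esub> xx" using ab E2[of a b] by (simp add: phiA_mult)
  qed
  have one: "\<one>\<^bsub>?R\<^esub> = \<one>\<^bsub>?Q\<^esub>" by simp
  have cQR: "carrier ?R = carrier ?Q" using carrQM .
  have invQ: "\<And>xx. xx \<in> carrier ?Q \<Longrightarrow> inv\<^bsub>?R\<^esub> xx = inv\<^bsub>?Q\<^esub> xx"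
  proof -
    fix xx assume xx: "xx \<in> carrier ?Q"
    have "inv\<^bsub>?Q\<^esub> xx \<otimes>\<^bsub>?R\<^esub> xx = \<one>\<^bsub>?R\<^esub>" using ops[of "inv\<^bsub>?Q\<^esub> xx" xx] xx one by simp
    thus "inv\<^bsub>?R\<^esub> xx = inv\<^bsub>?Q\<^esub> xx" using R.inv_equality xx cQR by simp
  qed
  have sb: "skew_brace ?Q ?R" unfolding skew_brace_def
  proof (intro conjI ballI Q.is_group R.is_group cQR[symmetric])
    fix xx yy zz assume "xx \<in> carrier ?Q" "yy \<in> carrier ?Q" "zz \<in> carrier ?Q"
    then obtain a b c where abc: "a \<in> carrier A" "b \<in> carrier A" "c \<in> carrier A" "xx = phi a" "yy = phi b" "zz = phi c"
      using carrQ by auto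
    have "phi (a \<otimes>\<^bsub>M\<^esub> (b \<otimes>\<^bsub>A\<^esub> c)) = xx \<otimes>\<^bsub>?R\<^esub> (yy \<otimes>\<^bsub>?Q\<^esub> zz)"
      using abc by (simp add: phiA_mult phiM_mult)
    moreover have "phi ((a \<otimes>\<^bsub>M\<^esub> b) \<otimes>\<^bsub>A\<^esub> inv\<^bsub>A\<^esub> a \<otimes>\<^bsub>A\<^esub> (a \<otimes>\<^bsub>M\<^esub> c)) =
        (xx \<otimes>\<^bsub>?R\<^esub> yy) \<otimes>\<^bsub>?Q\<^esub> inv\<^bsub>?Q\<^esub> xx \<otimes>\<^bsub>?Q\<^esub> (xx \<otimes>\<^bsub>?R\<^esub> zz)"
      using abc by (simp add: phiA_mult phiM_mult phiA_inv)
    ultimately show "xx \<otimes>\<^bsub>?R\<^esub> (yy \<otimes>\<^bsub>?Q\<^esub> zz) = (xx \<otimes>\<^bsub>?R\<^esub> yy) \<otimes>\<^bsub>?Q\<^esub> inv\<^bsub>?Q\<^esub> xx \<otimes>\<^bsub>?Q\<^esub> (xx \<otimes>\<^bsub>?R\<^esub> zz)"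
      using ax[OF abc(1-3)] by simp
  qed
  have triv_ideal: "brace_ideal ?Q ?R {\<one>\<^bsub>?Q\<^esub>}" unfolding brace_ideal_def
  proof (intro conjI ballI)
    show "{\<one>\<^bsub>?Q\<^esub>} \<lhd> ?Q" using Q.one_is_normal .
    show "{\<one>\<^bsub>?Q\<^esub>} \<lhd> ?R" using R.one_is_normal one by simp
    fix b x assume b: "b \<in> carrier ?Q" and x: "x \<in> {\<one>\<^bsub>?Q\<^esub>}"
    have "b \<otimes>\<^bsub>?R\<^esub> \<one>\<^bsub>?Q\<^esub> = b" using R.r_one[of b] b cQR one by simp
    thus "brace_lambda ?Q ?R b x \<in> {\<one>\<^bsub>?Q\<^esub>}" using x b unfolding brace_lambda_def by simp
  qed
  have gens: "brace_comm_gens ?Q ?R (carrier ?Q) (carrier ?Q) \<subseteq> {\<one>\<^bsub>?Q\<^esub>}"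
  proof -
    have "xx \<otimes>\<^bsub>?Q\<^esub> yy \<otimes>\<^bsub>?Q\<^esub> inv\<^bsub>?Q\<^esub> xx \<otimes>\<^bsub>?Q\<^esub> inv\<^bsub>?Q\<^esub> yy = \<one>\<^bsub>?Q\<^esub>"
      if "xx \<in> carrier ?Q" "yy \<in> carrier ?Q" for xx yy
      using comm_commutator[OF Q.is_group that comm[OF that]] .
    moreover have "xx \<otimes>\<^bsub>?R\<^esub> yy \<otimes>\<^bsub>?R\<^esub> inv\<^bsub>?R\<^esub> xx \<otimes>\<^bsub>?R\<^esub> inv\<^bsub>?R\<^esub> yy = \<one>\<^bsub>?Q\<^esub>"
      if XY: "xx \<in> carrier ?Q" "yy \<in> carrier ?Q" for xx yy
    proof -
      have "xx \<otimes>\<^bsub>?R\<^esub> yy = yy \<otimes>\<^bsub>?R\<^esub> xx" using ops comm XY by simp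
      thus ?thesis using comm_commutator[OF R.is_group, of xx yy] XY cQR one by simp
    qed
    moreover have "(xx \<otimes>\<^bsub>?R\<^esub> yy) \<otimes>\<^bsub>?Q\<^esub> inv\<^bsub>?Q\<^esub> (xx \<otimes>\<^bsub>?Q\<^esub> yy) = \<one>\<^bsub>?Q\<^esub>"
      if XY: "xx \<in> carrier ?Q" "yy \<in> carrier ?Q" for xx yy
      using ops[OF XY] XY by simp
    note c1 = calculation this
    show ?thesis unfolding brace_comm_gens_def
    proof (intro Un_least subsetI)
      fix u assume "u \<in> {i \<otimes>\<^bsub>?Q\<^esub> j \<otimes>\<^bsub>?Q\<^esub> inv\<^bsub>?Q\<^esub> i \<otimes>\<^bsub>?Q\<^esub> inv\<^bsub>?Q\<^esub> j |i j. i \<in> carrier ?Q \<and> j \<in> carrier ?Q}"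
      then obtain i j where "i \<in> carrier ?Q" "j \<in> carrier ?Q" "u = i \<otimes>\<^bsub>?Q\<^esub> j \<otimes>\<^bsub>?Q\<^esub> inv\<^bsub>?Q\<^esub> i \<otimes>\<^bsub>?Q\<^esub> inv\<^bsub>?Q\<^esub> j" by auto
      thus "u \<in> {\<one>\<^bsub>?Q\<^esub>}" using c1(1)[of i j] by simp
    next
      fix u assume "u \<in> {i \<otimes>\<^bsub>?R\<^esub> j \<otimes>\<^bsub>?R\<^esub> inv\<^bsub>?R\<^esub> i \<otimes>\<^bsub>?R\<^esub> inv\<^bsub>?R\<^esub> j |i j. i \<in> carrier ?Q \<and> j \<in> carrier ?Q}"
      then obtain i j where "i \<in> carrier ?Q" "j \<in> carrier ?Q" "u = i \<otimes>\<^bsub>?R\<^esub> j \<otimes>\<^bsub>?R\<^esub> inv\<^bsub>?R\<^esub> i \<otimes>\<^bsub>?R\<^esub> inv\<^bsub>?R\<^esub> j" by auto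
      thus "u \<in> {\<one>\<^bsub>?Q\<^esub>}" using c1(2)[of i j] by simp
    next
      fix u assume "u \<in> {(i \<otimes>\<^bsub>?R\<^esub> j) \<otimes>\<^bsub>?Q\<^esub> inv\<^bsub>?Q\<^esub> (i \<otimes>\<^bsub>?Q\<^esub> j) |i j. i \<in> carrier ?Q \<and> j \<in> carrier ?Q}"
      then obtain i j where "i \<in> carrier ?Q" "j \<in> carrier ?Q" "u = (i \<otimes>\<^bsub>?R\<^esub> j) \<otimes>\<^bsub>?Q\<^esub> inv\<^bsub>?Q\<^esub> (i \<otimes>\<^bsub>?Q\<^esub> j)" by auto
      thus "u \<in> {\<one>\<^bsub>?Q\<^esub>}" using c1(3)[of i j] by simp
    qed
  qed
  have ab: "brace_abelian ?Q ?R" unfolding brace_abelian_def brace_comm_def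
  proof
    show "\<Inter> {K. brace_ideal ?Q ?R K \<and> brace_comm_gens ?Q ?R (carrier ?Q) (carrier ?Q) \<subseteq> K} \<subseteq> {\<one>\<^bsub>?Q\<^esub>}"
      by (rule Inter_lower) (intro CollectI conjI triv_ideal gens)
    show "{\<one>\<^bsub>?Q\<^esub>} \<subseteq> \<Inter> {K. brace_ideal ?Q ?R K \<and> brace_comm_gens ?Q ?R (carrier ?Q) (carrier ?Q) \<subseteq> K}"
    proof (intro subsetI InterI)
      fix u K assume "u \<in> {\<one>\<^bsub>?Q\<^esub>}" and "K \<in> {K. brace_ideal ?Q ?R K \<and> brace_comm_gens ?Q ?R (carrier ?Q) (carrier ?Q) \<subseteq> K}"
      hence u: "u = \<one>\<^bsub>?Q\<^esub>" and nK: "K \<lhd> ?Q" unfolding brace_ideal_def by auto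
      have "subgroup K ?Q" using nK by (rule normal_imp_subgroup)
      thus "u \<in> K" using subgroup.one_closed u by metis
    qed
  qed
  have Ine: "I \<noteq> carrier A" and maxI: "\<And>S. brace_ideal A M S \<Longrightarrow> S \<noteq> carrier A \<Longrightarrow> I \<subseteq> S \<Longrightarrow> S = I"
    using mx unfolding brace_maximal_ideal_def by auto
  have nt: "carrier ?Q \<noteq> {\<one>\<^bsub>?Q\<^esub>}"
  proof
    assume eq: "carrier ?Q = {\<one>\<^bsub>?Q\<^esub>}"
    have "carrier A \<subseteq> I"
    proof
      fix a assume a: "a \<in> carrier A"
      hence "phi a = \<one>\<^bsub>?Q\<^esub>" using eq phi_closed[OF a] by blast
      thus "a \<in> I" using phi_eq_one a by simp
    qed
    thus False using Ine I_sub by blast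
  qed
  have subs: "H = {\<one>\<^bsub>?Q\<^esub>} \<or> H = carrier ?Q" if H: "subgroup H ?Q" for H
  proof -
    let ?S = "{b\<in>carrier A. phi b \<in> H}"
    have HR: "subgroup H ?R"
    proof (rule R.subgroupI)
      show "H \<subseteq> carrier ?R" using subgroup.subset[OF H] cQR by simp
      show "H \<noteq> {}" using subgroup.one_closed[OF H] by blast
      fix xx yy assume xx: "xx \<in> H" and yy: "yy \<in> H"
      have Xc: "xx \<in> carrier ?Q" and Yc: "yy \<in> carrier ?Q" using xx yy subgroup.subset[OF H] by auto
      show "inv\<^bsub>?R\<^esub> xx \<in> H" using invQ[OF Xc] subgroup.m_inv_closed[OF H xx] by simp
      show "xx \<otimes>\<^bsub>?R\<^esub> yy \<in> H" using ops[OF Xc Yc] subgroup.m_closed[OF H xx yy] by simp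
    qed
    have cQ: "xx \<otimes>\<^bsub>?Q\<^esub> y \<otimes>\<^bsub>?Q\<^esub> inv\<^bsub>?Q\<^esub> xx \<in> H" if "xx \<in> carrier ?Q" "y \<in> H" for xx y
    proof -
      have yc: "y \<in> carrier ?Q" using that subgroup.subset[OF H] by auto
      have "xx \<otimes>\<^bsub>?Q\<^esub> y \<otimes>\<^bsub>?Q\<^esub> inv\<^bsub>?Q\<^esub> xx = y \<otimes>\<^bsub>?Q\<^esub> (xx \<otimes>\<^bsub>?Q\<^esub> inv\<^bsub>?Q\<^esub> xx)"
        using comm[OF that(1) yc] that yc by (simp add: Q.m_assoc)
      thus ?thesis using that yc Q.r_one[OF yc] by simp
    qed
    have cR: "xx \<otimes>\<^bsub>?R\<^esub> y \<otimes>\<^bsub>?R\<^esub> inv\<^bsub>?R\<^esub> xx \<in> H" if "xx \<in> carrier ?R" "y \<in> H" for xx y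
    proof -
      have Xc: "xx \<in> carrier ?Q" using that cQR by simp
      have yc: "y \<in> carrier ?Q" using that subgroup.subset[OF H] by auto
      have "xx \<otimes>\<^bsub>?R\<^esub> y \<otimes>\<^bsub>?R\<^esub> inv\<^bsub>?R\<^esub> xx = xx \<otimes>\<^bsub>?Q\<^esub> y \<otimes>\<^bsub>?Q\<^esub> inv\<^bsub>?Q\<^esub> xx"
        using ops Xc yc invQ[OF Xc] by simp
      thus ?thesis using cQ[OF Xc that(2)] by simp
    qed
    have nA: "?S \<lhd> A" using normal_vimage[OF homA H] cQ by blast
    have nM: "{b\<in>carrier M. phi b \<in> H} \<lhd> M" using normal_vimage[OF homM HR] cR by blast
    have idS: "brace_ideal A M ?S" unfolding brace_ideal_def
    proof (intro conjI nA ballI)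
      show "?S \<lhd> M" using nM carr by simp
      fix b s assume b: "b \<in> carrier A" and s: "s \<in> ?S"
      have "phi (lam b s) = inv\<^bsub>?Q\<^esub> phi b \<otimes>\<^bsub>?Q\<^esub> (phi b \<otimes>\<^bsub>?Q\<^esub> phi s)"
        unfolding lam_def using b s E1[of b s] by (simp add: phiA_mult phiA_inv)
      also have "\<dots> = phi s" using b s Q.l_one[OF phi_closed, of s] by (simp add: Q.m_assoc[symmetric])
      finally show "brace_lambda A M b s \<in> ?S" using b s by (simp add: lam_eq[symmetric])
    qed
    have IS: "I \<subseteq> ?S"
    proof
      fix i assume i: "i \<in> I"
      hence ic: "i \<in> carrier A" using I_sub by auto
      hence "phi i = \<one>\<^bsub>?Q\<^esub>" using phi_eq_one i by simp
      thus "i \<in> ?S" using ic subgroup.one_closed[OF H] by simp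
    qed
    show ?thesis
    proof (cases "?S = carrier A")
      case True
      have "carrier ?Q \<subseteq> H" using True carrQ by auto
      thus ?thesis using subgroup.subset[OF H] by blast
    next
      case False
      hence SI: "?S = I" using maxI idS IS by blast
      have "H \<subseteq> {\<one>\<^bsub>?Q\<^esub>}"
      proof
        fix xx assume xx: "xx \<in> H"
        then obtain a where a: "a \<in> carrier A" "xx = phi a" using subgroup.subset[OF H] carrQ by blast
        hence "a \<in> I" using SI xx by blast
        thus "xx \<in> {\<one>\<^bsub>?Q\<^esub>}" using phi_eq_one a by simp
      qed
      thus ?thesis using subgroup.one_closed[OF H] by blast
    qed
  qed
  have cp: "cyclic_group ?Q \<and> Factorial_Ring.prime (order ?Q)"
    using simple_cyclic[OF Q.is_group nt subs] .
  show ?thesis using sb ab cQR ops cp by simp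
qed

end

lemma comm_from_commutator:
  assumes "group G" "x \<in> carrier G" "y \<in> carrier G"
    "x \<otimes>\<^bsub>G\<^esub> y \<otimes>\<^bsub>G\<^esub> inv\<^bsub>G\<^esub> x \<otimes>\<^bsub>G\<^esub> inv\<^bsub>G\<^esub> y = \<one>\<^bsub>G\<^esub>"
  shows "x \<otimes>\<^bsub>G\<^esub> y = y \<otimes>\<^bsub>G\<^esub> x"
proof -
  interpret group G by fact
  have "x \<otimes>\<^bsub>G\<^esub> y = (x \<otimes>\<^bsub>G\<^esub> y \<otimes>\<^bsub>G\<^esub> inv\<^bsub>G\<^esub> x \<otimes>\<^bsub>G\<^esub> inv\<^bsub>G\<^esub> y) \<otimes>\<^bsub>G\<^esub> (y \<otimes>\<^bsub>G\<^esub> x)"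
  proof -
    have e1: "inv\<^bsub>G\<^esub> y \<otimes>\<^bsub>G\<^esub> (y \<otimes>\<^bsub>G\<^esub> x) = x" using assms(2,3) by (simp add: m_assoc[symmetric])
    have "(x \<otimes>\<^bsub>G\<^esub> y \<otimes>\<^bsub>G\<^esub> inv\<^bsub>G\<^esub> x \<otimes>\<^bsub>G\<^esub> inv\<^bsub>G\<^esub> y) \<otimes>\<^bsub>G\<^esub> (y \<otimes>\<^bsub>G\<^esub> x)
       = (x \<otimes>\<^bsub>G\<^esub> y \<otimes>\<^bsub>G\<^esub> inv\<^bsub>G\<^esub> x) \<otimes>\<^bsub>G\<^esub> (inv\<^bsub>G\<^esub> y \<otimes>\<^bsub>G\<^esub> (y \<otimes>\<^bsub>G\<^esub> x))"
      using assms(2,3) by (simp add: m_assoc)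
    also have "\<dots> = (x \<otimes>\<^bsub>G\<^esub> y) \<otimes>\<^bsub>G\<^esub> (inv\<^bsub>G\<^esub> x \<otimes>\<^bsub>G\<^esub> x)" unfolding e1 using assms(2,3) by (simp add: m_assoc)
    also have "\<dots> = x \<otimes>\<^bsub>G\<^esub> y" using assms(2,3) by simp
    finally show ?thesis by simp
  qed
  also have "\<dots> = y \<otimes>\<^bsub>G\<^esub> x" using assms by simp
  finally show ?thesis .
qed

lemma step_exists: "P 0 \<Longrightarrow> \<not> P n \<Longrightarrow> \<exists>k<n. P k \<and> \<not> P (Suc k)"
proof (induction n)
  case 0 thus ?case by simp
next
  case (Suc n)
  show ?case
  proof (cases "P n")
    case True thus ?thesis using Suc by blast
  next
    case False thus ?thesis using Suc by (meson less_SucI)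
  qed
qed

context sideal begin

lemma phi_eqI: assumes "u \<in> carrier A" "v \<in> carrier A" "u \<otimes>\<^bsub>A\<^esub> inv\<^bsub>A\<^esub> v \<in> I"
  shows "phi u = phi v"
proof -
  interpret Q: group "A Mod I" using QA_group .
  have "phi u \<otimes>\<^bsub>A Mod I\<^esub> inv\<^bsub>A Mod I\<^esub> phi v = \<one>\<^bsub>A Mod I\<^esub>"
    using phi_eq_one[of "u \<otimes>\<^bsub>A\<^esub> inv\<^bsub>A\<^esub> v"] assms by (simp add: phiA_mult phiA_inv)
  hence "inv\<^bsub>A Mod I\<^esub> (inv\<^bsub>A Mod I\<^esub> phi v) = phi u"
    using Q.inv_equality[of "phi u" "inv\<^bsub>A Mod I\<^esub> phi v"] assms by simp
  thus ?thesis using assms by simp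
qed

end

theorem corollary4p6:
  fixes A M :: "'a monoid" and I :: "'a set"
  assumes "skew_brace A M"
    and "brace_soluble A M"
    and "brace_maximal_ideal A M I"
  shows "skew_brace (A Mod I) (M Mod I) \<and> brace_abelian (A Mod I) (M Mod I)
    \<and> carrier (A Mod I) = carrier (M Mod I)
    \<and> (\<forall>x\<in>carrier (A Mod I). \<forall>y\<in>carrier (A Mod I).
          x \<otimes>\<^bsub>A Mod I\<^esub> y = x \<otimes>\<^bsub>M Mod I\<^esub> y)
    \<and> cyclic_group (A Mod I) \<and> Factorial_Ring.prime (order (A Mod I))"
proof -
  interpret sbrace A M using sbraceI[OF assms(1)] .
  interpret sideal A M I
    using assms(3) unfolding brace_maximal_ideal_def by unfold_locales auto
  interpret Q: group "A Mod I" using QA_group .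
  interpret R: group "M Mod I" using QM_group .
  have Ine: "I \<noteq> carrier A" and maxI: "\<And>S. brace_ideal A M S \<Longrightarrow> S \<noteq> carrier A \<Longrightarrow> I \<subseteq> S \<Longrightarrow> S = I"
    using assms(3) unfolding brace_maximal_ideal_def by auto
  obtain n and Ich :: "nat \<Rightarrow> 'a set" where I0: "Ich 0 = carrier A" and In: "Ich n = {\<one>\<^bsub>A\<^esub>}"
    and ch0: "\<forall>i<n. Ich (Suc i) \<subseteq> Ich i \<and>
        brace_ideal (A\<lparr>carrier := Ich i\<rparr>) (M\<lparr>carrier := Ich i\<rparr>) (Ich (Suc i)) \<and>
        brace_abelian (A\<lparr>carrier := Ich i\<rparr> Mod Ich (Suc i)) (M\<lparr>carrier := Ich i\<rparr> Mod Ich (Suc i))"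
    by (insert assms(2), unfold brace_soluble_def, elim exE conjE, rule that, assumption+)
  have ch: "\<And>i. i < n \<Longrightarrow> Ich (Suc i) \<subseteq> Ich i \<and>
        brace_ideal (A\<lparr>carrier := Ich i\<rparr>) (M\<lparr>carrier := Ich i\<rparr>) (Ich (Suc i)) \<and>
        brace_abelian (A\<lparr>carrier := Ich i\<rparr> Mod Ich (Suc i)) (M\<lparr>carrier := Ich i\<rparr> Mod Ich (Suc i))"
    using ch0 by simp
  have sub: "k \<le> n \<Longrightarrow> Ich k \<subseteq> carrier A" for k
  proof (induction k)
    case 0 thus ?case using I0 by simp
  next
    case (Suc k) thus ?case using ch[of k] by auto
  qed
  define P where "P k = (\<forall>b\<in>carrier A. \<exists>x\<in>Ich k. phi b = phi x)" for k
  have P0: "P 0" unfolding P_def I0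
  proof (intro ballI)
    fix b assume "b \<in> carrier A" thus "\<exists>x\<in>carrier A. phi b = phi x" by (rule bexI[of _ b, OF refl])
  qed
  have Pn: "\<not> P n"
  proof
    assume "P n"
    have "carrier A \<subseteq> I"
    proof
      fix a assume a: "a \<in> carrier A"
      obtain x where x: "x \<in> Ich n" "phi a = phi x" using \<open>P n\<close> a unfolding P_def by meson
      hence "phi a = phi \<one>\<^bsub>A\<^esub>" using In by simp
      hence "phi a = \<one>\<^bsub>A Mod I\<^esub>" using phi_one by simp
      thus "a \<in> I" using phi_eq_one a by simp
    qed
    thus False using Ine I_sub by blast
  qed
  obtain k where k: "k < n" "P k" "\<not> P (Suc k)" using step_exists[of P n, OF P0 Pn] by blast
  define K where "K = Ich k"
  define J where "J = Ich (Suc k)"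
  have KB: "K \<subseteq> carrier A" using sub k(1) K_def by simp
  have JK: "J \<subseteq> K" using ch[OF k(1)] J_def K_def by simp
  have Jid: "brace_ideal (A\<lparr>carrier := K\<rparr>) (M\<lparr>carrier := K\<rparr>) J"
    using ch[OF k(1)] J_def K_def by simp
  have Jab: "brace_abelian (A\<lparr>carrier := K\<rparr> Mod J) (M\<lparr>carrier := K\<rparr> Mod J)"
    using ch[OF k(1)] J_def K_def by simp
  have JnA: "J \<lhd> A\<lparr>carrier := K\<rparr>" and JnM: "J \<lhd> M\<lparr>carrier := K\<rparr>" using Jid unfolding brace_ideal_def by auto
  have gA: "group (A\<lparr>carrier := K\<rparr>)" using JnA by (simp add: normal_def)
  have gM: "group (M\<lparr>carrier := K\<rparr>)" using JnM by (simp add: normal_def)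
  have sK: "subgroup K A" using restr_subgroup[OF A.group_axioms KB gA] .
  have one_J: "\<one>\<^bsub>A\<^esub> \<in> J" using subgroup.one_closed[OF normal_imp_subgroup[OF JnA]] by simp
  have PK: "\<forall>b\<in>carrier A. \<exists>x\<in>K. phi b = phi x" using k(2) unfolding P_def K_def .
  let ?S = "{b\<in>carrier A. \<exists>j\<in>J. phi b = phi j}"
  have Sid: "brace_ideal A M ?S" using ideal_S[OF KB gA gM Jid PK] .
  have IS: "I \<subseteq> ?S"
  proof
    fix i assume i: "i \<in> I"
    hence ic: "i \<in> carrier A" using I_sub by auto
    have "phi i = \<one>\<^bsub>A Mod I\<^esub>" by (rule phi_eq_one[OF ic, THEN iffD2, OF i])
    hence "phi i = phi \<one>\<^bsub>A\<^esub>" using phi_one by simp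
    thus "i \<in> ?S" using ic one_J by blast
  qed
  have SnB: "?S \<noteq> carrier A"
  proof
    assume "?S = carrier A"
    hence "P (Suc k)" unfolding P_def using J_def by blast
    thus False using k(3) by simp
  qed
  have SI: "?S = I" using maxI[OF Sid SnB IS] .
  have JI: "J \<subseteq> I"
  proof
    fix j assume j: "j \<in> J"
    hence "j \<in> carrier A" using JK KB by auto
    hence "j \<in> ?S" using j by blast
    thus "j \<in> I" using SI by simp
  qed
  have sbK: "sbrace (A\<lparr>carrier := K\<rparr>) (M\<lparr>carrier := K\<rparr>)"
    using sbrace_restr[OF sbraceI[OF assms(1)] KB gA gM] .
  have sidK: "sideal (A\<lparr>carrier := K\<rparr>) (M\<lparr>carrier := K\<rparr>) J"
    using sbK Jid by (simp add: sideal_def sideal_axioms_def)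
  have invc: "\<And>x. x \<in> K \<Longrightarrow> inv\<^bsub>A\<lparr>carrier := K\<rparr>\<^esub> x = inv\<^bsub>A\<^esub> x"
    using A.m_inv_consistent[OF sK] by simp
  have g1: "x \<otimes>\<^bsub>A\<^esub> y \<otimes>\<^bsub>A\<^esub> inv\<^bsub>A\<^esub> x \<otimes>\<^bsub>A\<^esub> inv\<^bsub>A\<^esub> y \<in> I" if "x \<in> K" "y \<in> K" for x y
    using sideal.abelian_gens(1)[OF sidK Jab, of x y] that invc JI by auto
  have g3: "(x \<otimes>\<^bsub>M\<^esub> y) \<otimes>\<^bsub>A\<^esub> inv\<^bsub>A\<^esub> (x \<otimes>\<^bsub>A\<^esub> y) \<in> I" if "x \<in> K" "y \<in> K" for x y
  proof -
    have "x \<otimes>\<^bsub>A\<^esub> y \<in> K" using subgroup.m_closed[OF sK that] .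
    thus ?thesis using sideal.abelian_gens(2)[OF sidK Jab, of x y] that invc JI by auto
  qed
  have E2: "phi (a \<otimes>\<^bsub>A\<^esub> b) = phi (b \<otimes>\<^bsub>A\<^esub> a)" if ab: "a \<in> carrier A" "b \<in> carrier A" for a b
  proof -
    obtain x y where xy: "x \<in> K" "y \<in> K" "phi a = phi x" "phi b = phi y" using PK ab by meson
    have xyc: "x \<in> carrier A" "y \<in> carrier A" using xy KB by auto
    have "phi (x \<otimes>\<^bsub>A\<^esub> y \<otimes>\<^bsub>A\<^esub> inv\<^bsub>A\<^esub> x \<otimes>\<^bsub>A\<^esub> inv\<^bsub>A\<^esub> y) = \<one>\<^bsub>A Mod I\<^esub>"
      using phi_eq_one g1[OF xy(1,2)] xyc by simp
    hence "phi x \<otimes>\<^bsub>A Mod I\<^esub> phi y \<otimes>\<^bsub>A Mod I\<^esub> inv\<^bsub>A Mod I\<^esub> phi x \<otimes>\<^bsub>A Mod I\<^esub> inv\<^bsub>A Mod I\<^esub> phi y = \<one>\<^bsub>A Mod I\<^esub>"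
      using xyc by (simp add: phiA_mult phiA_inv)
    hence "phi x \<otimes>\<^bsub>A Mod I\<^esub> phi y = phi y \<otimes>\<^bsub>A Mod I\<^esub> phi x"
      using comm_from_commutator[OF Q.is_group phi_closed phi_closed] xyc by blast
    thus ?thesis using ab xy by (simp add: phiA_mult)
  qed
  have E1: "phi (a \<otimes>\<^bsub>M\<^esub> b) = phi (a \<otimes>\<^bsub>A\<^esub> b)" if ab: "a \<in> carrier A" "b \<in> carrier A" for a b
  proof -
    obtain x y where xy: "x \<in> K" "y \<in> K" "phi a = phi x" "phi b = phi y" using PK ab by meson
    have xyc: "x \<in> carrier A" "y \<in> carrier A" using xy KB by auto
    have "phi (x \<otimes>\<^bsub>M\<^esub> y) = phi (x \<otimes>\<^bsub>A\<^esub> y)" using phi_eqI g3[OF xy(1,2)] xyc by simp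
    hence "phi x \<otimes>\<^bsub>M Mod I\<^esub> phi y = phi x \<otimes>\<^bsub>A Mod I\<^esub> phi y" using xyc by (simp add: phiA_mult phiM_mult)
    thus ?thesis using ab xy by (simp add: phiA_mult phiM_mult)
  qed
  show ?thesis using final[OF E1 E2 assms(3)] by blast
qed

end
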